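(* Let $p,q\ge1$, $N\ge1$, and let $\mu$ be a $q\times p$ matrix of measures. Assume that $\mathscr M_N$, $\mathscr M_{N,(b,0)}$ ($b\in\{1,\dots,q\}$) and $\mathscr M_{N,(0,a)}$ ($a\in\{1,\dots,p\}$) admit Gauss--Borel factorizations $\mathscr M_{N,(n,m)}=\mathscr L_{N,(n,m)}^{-1}\mathscr U_{N,(n,m)}^{-1}$ with lower unitriangular $\mathscr L_{N,(n,m)}$, let $U_b:=\mathscr U_{N,(b,0)}^{-1}\mathscr U_{N,(b-1,0)}$ and $L_a:=\mathscr L_{N,(0,a-1)}\mathscr L_{N,(0,a)}^{-1}$, and write $U_{b,n}:=(U_b)_{n,n}$, $L_{a,n}:=(L_a)_{n,n-1}$. Then for $a\in\{1,\dots,p\}$, $b\in\{1,\dots,q\}$: \[L_{a,n}=(\mathscr L_{N,(0,a-1)})_{n,n-1}-(\mathscr L_{N,(0,a)})_{n,n-1},\quad n\in\{1,\dots,N-1\},\] \[U_{b,n}=\frac{(\mathscr U_{N,(b-1,0)})_{n,n}}{(\mathscr U_{N,(b,0)})_{n,n}},\quad n\in\{0,\dots,N-1\},\] \[L_{a,n}=\frac{(\mathscr U_{N,(0,a)})_{n-1,n-1}}{(\mathscr U_{N,(0,a-1)})_{n,n}},\quad n\in\{1,\dots,N-1\},\] \[U_{b,n}=(1-\delta_{n,0})(\mathscr L_{N,(b,0)})_{n,n-1}-(\mathscr L_{N,(b-1,0)})_{n+1,n},\quad n\in\{0,\dots,N-2\}.\]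
   Context: All matrices are indexed from $0$. Fix integers $p,q\ge1$ and a $q\times p$ matrix $\mu$ of real measures on $\mathbb R$ with finite moments. For $r,n\ge1$, $X^{[n]}_{[r]}(x)$ is the $n\times r$ matrix whose row $k$ is $x^{\lfloor k/r\rfloor}e_{k\bmod r}^\top$ ($e_0,\dots,e_{r-1}$ standard basis of $\mathbb R^r$). Moment matrices: $\mathscr M^{[n,m]}=\int X^{[n]}_{[q]}\,\mathrm d\mu\,(X^{[m]}_{[p]})^\top$, $\mathscr M_n=\mathscr M^{[n,n]}$. $\mathfrak X_{[r,1]}(x)$ is the $r\times r$ matrix with $(\mathfrak X_{[r,1]})_{i,i+1}=1$ ($0\le i\le r-2$), $(\mathfrak X_{[r,1]})_{r-1,0}=x$, other entries $0$. Christoffel perturbations: $\mathrm d\mu_{(n,m)}:=\mathfrak X_{[q,1]}^n\,\mathrm d\mu\,(\mathfrak X_{[p,1]}^m)^\top$, with $\mathscr M_{N,(n,m)}$ the $N\times N$ moment matrix of $\mu_{(n,m)}$; $(n,m)=(0,0)$ gives $\mu$ itself, with factors $\mathscr L_N,\mathscr U_N$. *)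

theory Defs
  imports "HOL-Analysis.Analysis" "Jordan_Normal_Form.Matrix"
begin

text \<open>A real (signed) measure on the real line is represented by a pair of Borel
  measures (positive and negative part, e.g. its Jordan decomposition);
  integration against it is the difference of the two Lebesgue integrals.\<close>
type_synonym rmeas = "real measure \<times> real measure"

definition sint :: "rmeas \<Rightarrow> (real \<Rightarrow> real) \<Rightarrow> real" where
  "sint m f = integral\<^sup>L (fst m) f - integral\<^sup>L (snd m) f"

definition finite_moments_meas :: "rmeas \<Rightarrow> bool" where
  "finite_moments_meas m \<longleftrightarrow>
     sets (fst m) = sets borel \<and> sets (snd m) = sets borel \<and>
     (\<forall>k::nat. integrable (fst m) (\<lambda>x. x ^ k) \<and> integrable (snd m) (\<lambda>x. x ^ k))"

text \<open>A matrix of (generalised) measures is given by its entrywise integration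
  functionals: Phi i j f = \<integral> f d(mu_ij).\<close>
type_synonym mfun = "nat \<Rightarrow> nat \<Rightarrow> (real \<Rightarrow> real) \<Rightarrow> real"

definition meas_fun :: "(nat \<Rightarrow> nat \<Rightarrow> rmeas) \<Rightarrow> mfun" where
  "meas_fun mu = (\<lambda>i j f. sint (mu i j) f)"

definition Xmat :: "nat \<Rightarrow> nat \<Rightarrow> real \<Rightarrow> real mat" where
  "Xmat r n x = mat n r (\<lambda>(k, j). if j = k mod r then x ^ (k div r) else 0)"

definition Xfrak :: "nat \<Rightarrow> real \<Rightarrow> real mat" where
  "Xfrak r x = mat r r (\<lambda>(i, j). if j = i + 1 then 1
                                  else if i = r - 1 \<and> j = 0 then x else 0)"

definition mint :: "nat \<Rightarrow> nat \<Rightarrow> mfun \<Rightarrow> nat \<Rightarrow> nat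
                    \<Rightarrow> (real \<Rightarrow> real mat) \<Rightarrow> (real \<Rightarrow> real mat) \<Rightarrow> real mat" where
  "mint q p Phi n m A B = mat n m (\<lambda>(r, c).
      \<Sum>k<q. \<Sum>l<p. Phi k l (\<lambda>x. A x $$ (r, k) * B x $$ (c, l)))"

text \<open>Christoffel perturbation d\<mu>_(n,m) = \<frak>X_q^n d\<mu> (\<frak>X_p^m)^T, i.e. the
  (i,j) entry has polynomial density \<Sum>_{k,l} (\<frak>X_q^n)_{ik} (\<frak>X_p^m)_{jl} w.r.t. \<mu>_{kl}.\<close>
definition christoffel :: "nat \<Rightarrow> nat \<Rightarrow> mfun \<Rightarrow> nat \<Rightarrow> nat \<Rightarrow> mfun" where
  "christoffel q p Phi n m = (\<lambda>i j f.
      \<Sum>k<q. \<Sum>l<p. Phi k l (\<lambda>x. (Xfrak q x ^\<^sub>m n) $$ (i, k) * f x * (Xfrak p x ^\<^sub>m m) $$ (j, l)))"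

definition moment_mat :: "nat \<Rightarrow> nat \<Rightarrow> mfun \<Rightarrow> nat \<Rightarrow> nat \<Rightarrow> real mat" where
  "moment_mat q p Phi N M = mint q p Phi N M (Xmat q N) (Xmat p M)"

definition pert_moment :: "nat \<Rightarrow> nat \<Rightarrow> (nat \<Rightarrow> nat \<Rightarrow> rmeas) \<Rightarrow> nat \<Rightarrow> nat \<Rightarrow> nat \<Rightarrow> real mat" where
  "pert_moment q p mu N n m = moment_mat q p (christoffel q p (meas_fun mu) n m) N N"

definition minv :: "real mat \<Rightarrow> real mat" where
  "minv A = (THE B. B \<in> carrier_mat (dim_row A) (dim_row A) \<and>
                    A * B = 1\<^sub>m (dim_row A) \<and> B * A = 1\<^sub>m (dim_row A))"

definition lower_unitriangular :: "real mat \<Rightarrow> bool" where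
  "lower_unitriangular L \<longleftrightarrow>
     (\<forall>i<dim_row L. L $$ (i, i) = 1 \<and> (\<forall>j<dim_col L. i < j \<longrightarrow> L $$ (i, j) = 0))"

definition gauss_borel :: "nat \<Rightarrow> real mat \<Rightarrow> real mat \<Rightarrow> real mat \<Rightarrow> bool" where
  "gauss_borel N M L U \<longleftrightarrow>
     L \<in> carrier_mat N N \<and> U \<in> carrier_mat N N \<and>
     lower_unitriangular L \<and> upper_triangular U \<and> invertible_mat U \<and>
     M = minv L * minv U"

end

theory Submission imports Defs "Jordan_Normal_Form.Determinant" begin

lemma mult_entry:
  assumes "A \<in> carrier_mat n m" "B \<in> carrier_mat m k" "i < n" "j < k"
  shows "(A * B) $$ (i,j) = (\<Sum>l<m. A $$ (i,l) * B $$ (l,j))"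
  using assms by (simp add: scalar_prod_def lessThan_atLeast0 row_def col_def)

lemma sum_single:
  assumes "finite A" "k0 \<in> A" "\<And>k. k \<in> A \<Longrightarrow> k \<noteq> k0 \<Longrightarrow> f k = 0"
  shows "sum f A = f k0"
proof -
  have "sum f A = f k0 + sum f (A - {k0})" using assms sum.remove by metis
  moreover have "sum f (A - {k0}) = 0" using assms by (intro sum.neutral) auto
  ultimately show ?thesis by simp
qed

lemma sum_two:
  assumes "finite A" "a \<in> A" "b \<in> A" "a \<noteq> b" "\<And>k. k \<in> A \<Longrightarrow> k \<noteq> a \<Longrightarrow> k \<noteq> b \<Longrightarrow> f k = 0"
  shows "sum f A = f a + f b"
proof -
  have "sum f A = sum f {a, b}"
    using assms by (intro sum.mono_neutral_right) auto
  then show ?thesis using assms by simp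
qed

lemma minv_prop:
  assumes "A \<in> carrier_mat n n" "invertible_mat A"
  shows "minv A \<in> carrier_mat n n \<and> A * minv A = 1\<^sub>m n \<and> minv A * A = 1\<^sub>m n"
proof -
  obtain B where B0: "A * B = 1\<^sub>m n" "B * A = 1\<^sub>m (dim_row B)"
    using assms unfolding invertible_mat_def inverts_mat_def by auto
  have Bc: "B \<in> carrier_mat n n" using B0 assms
    by (metis carrier_matD carrier_matI index_mult_mat(2,3) index_one_mat(2,3))
  have B: "A * B = 1\<^sub>m n" "B * A = 1\<^sub>m n" using B0 Bc by auto
  have "minv A = B" unfolding minv_def
  proof (rule the_equality)
    show "B \<in> carrier_mat (dim_row A) (dim_row A) \<and> A * B = 1\<^sub>m (dim_row A) \<and> B * A = 1\<^sub>m (dim_row A)"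
      using B Bc assms by auto
  next
    fix C assume C: "C \<in> carrier_mat (dim_row A) (dim_row A) \<and> A * C = 1\<^sub>m (dim_row A) \<and> C * A = 1\<^sub>m (dim_row A)"
    have Cc: "C \<in> carrier_mat n n" and AC: "A * C = 1\<^sub>m n" using C assms by auto
    have "C = (B * A) * C" using B Cc by simp
    also have "\<dots> = B * (A * C)" using Bc Cc assms by (simp add: assoc_mult_mat[of B n n A n C n])
    also have "\<dots> = B" using AC Bc by simp
    finally show "C = B" .
  qed
  then show ?thesis using B Bc by simp
qed

lemma lut_invertible:
  assumes "L \<in> carrier_mat n n" "lower_unitriangular L"
  shows "invertible_mat L"
proof -
  have "Determinant.det L = prod_list (diag_mat L)"
    using assms by (intro det_lower_triangular) (auto simp: lower_unitriangular_def)
  also have "diag_mat L = map (\<lambda>i. 1) [0..<n]"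
    using assms by (auto simp: diag_mat_def lower_unitriangular_def)
  also have "prod_list (map (\<lambda>i. 1::real) [0..<n]) = 1"
    by (induct n) auto
  finally have "Determinant.det L \<noteq> 0" by simp
  from det_non_zero_imp_unit[OF assms(1) this, of undefined]
  obtain B where "B \<in> carrier_mat n n" "B * L = 1\<^sub>m n" "L * B = 1\<^sub>m n"
    unfolding Units_def ring_mat_def by auto
  then show ?thesis using assms unfolding invertible_mat_def inverts_mat_def by auto
qed

lemma lower_inv:
  fixes L B :: "real mat"
  assumes Lc: "L \<in> carrier_mat n n" and Bc: "B \<in> carrier_mat n n" and LB: "L * B = 1\<^sub>m n"
    and low: "\<And>i j. i < n \<Longrightarrow> j < n \<Longrightarrow> i < j \<Longrightarrow> L $$ (i,j) = 0"
  shows "i < n \<Longrightarrow> L $$ (i,i) * B $$ (i,i) = 1 \<and> (\<forall>j<n. i < j \<longrightarrow> B $$ (i,j) = 0)"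
proof (induction i rule: less_induct)
  case (less i)
  have key: "(\<Sum>l<n. L $$ (i,l) * B $$ (l,j)) = L $$ (i,i) * B $$ (i,j)" if "j < n" "i \<le> j" for j
  proof (rule sum_single)
    fix l assume "l \<in> {..<n}" "l \<noteq> i"
    then show "L $$ (i, l) * B $$ (l, j) = 0"
      using less that low[of i l] by (cases "l < i") auto
  qed (use less in auto)
  have e: "(\<Sum>l<n. L $$ (i,l) * B $$ (l,j)) = (if i = j then 1 else 0)" if "j < n" for j
    using mult_entry[OF Lc Bc less(2) that] LB less(2) that by simp
  have d: "L $$ (i,i) * B $$ (i,i) = 1" using key[of i] e[of i] less by simp
  moreover have "\<forall>j<n. i < j \<longrightarrow> B $$ (i,j) = 0"
  proof (intro allI impI)
    fix j assume "j < n" "i < j"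
    then have "L $$ (i,i) * B $$ (i,j) = 0" using key[of j] e[of j] by simp
    moreover have "L $$ (i,i) \<noteq> 0" using d by auto
    ultimately show "B $$ (i,j) = 0" by simp
  qed
  ultimately show ?case by simp
qed

lemma lower_inv_sub:
  fixes L B :: "real mat"
  assumes Lc: "L \<in> carrier_mat n n" and Bc: "B \<in> carrier_mat n n" and LB: "L * B = 1\<^sub>m n"
    and low: "\<And>i j. i < n \<Longrightarrow> j < n \<Longrightarrow> i < j \<Longrightarrow> L $$ (i,j) = 0"
    and i: "1 \<le> i" "i < n"
  shows "L $$ (i,i) * B $$ (i,i-1) + L $$ (i,i-1) * B $$ (i-1,i-1) = 0"
proof -
  have "(\<Sum>l<n. L $$ (i,l) * B $$ (l,i-1)) = L $$ (i,i) * B $$ (i,i-1) + L $$ (i,i-1) * B $$ (i-1,i-1)"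
  proof (rule sum_two)
    fix l assume "l \<in> {..<n}" "l \<noteq> i" "l \<noteq> i - 1"
    then show "L $$ (i, l) * B $$ (l, i-1) = 0"
      using i low[of i l] lower_inv[OF Lc Bc LB low, of l] by (cases "l < i") auto
  qed (use i in auto)
  moreover have "(L * B) $$ (i,i-1) = 0" using LB i by simp
  then have "(\<Sum>l<n. L $$ (i,l) * B $$ (l,i-1)) = 0"
    using mult_entry[OF Lc Bc, of i "i-1"] i by simp
  ultimately show ?thesis by simp
qed

lemma xfrak_pow:
  assumes "q \<ge> 1" "i < q"
  shows "k < q \<Longrightarrow> (Xfrak q x ^\<^sub>m n) $$ (i,k) = (if k = (i+n) mod q then x^((i+n) div q) else 0)"
proof (induction n arbitrary: k)
  case 0
  then show ?case using assms by (simp add: Xfrak_def)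
next
  case (Suc n)
  have Xc: "Xfrak q x \<in> carrier_mat q q" by (simp add: Xfrak_def)
  have Pc: "Xfrak q x ^\<^sub>m n \<in> carrier_mat q q" using Xc by (simp add: pow_carrier_mat)
  define s where "s = (i+n) mod q"
  define d where "d = (i+n) div q"
  have s: "s < q" using assms s_def by simp
  have "(Xfrak q x ^\<^sub>m Suc n) $$ (i,k) = (\<Sum>j<q. (Xfrak q x ^\<^sub>m n) $$ (i,j) * Xfrak q x $$ (j,k))"
    using mult_entry[OF Pc Xc assms(2) Suc.prems] by simp
  also have "\<dots> = (Xfrak q x ^\<^sub>m n) $$ (i,s) * Xfrak q x $$ (s,k)"
    by (rule sum_single) (use Suc.IH s s_def in auto)
  also have "\<dots> = x ^ d * Xfrak q x $$ (s,k)" using Suc.IH[OF s] s_def d_def by simp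
  also have "\<dots> = (if k = (i + Suc n) mod q then x ^ ((i + Suc n) div q) else 0)"
  proof (cases "Suc s = q")
    case True
    then have "(i + Suc n) mod q = 0" "(i + Suc n) div q = Suc d"
      using s_def d_def by (simp_all add: mod_Suc div_Suc)
    then show ?thesis using True Suc.prems s by (auto simp: Xfrak_def)
  next
    case False
    then have "(i + Suc n) mod q = Suc s" "(i + Suc n) div q = d"
      using s_def d_def by (simp_all add: mod_Suc div_Suc)
    then show ?thesis using False Suc.prems s by (auto simp: Xfrak_def)
  qed
  finally show ?case .
qed

lemma sint_zero[simp]: "sint m (\<lambda>x. 0) = 0"
  by (simp add: sint_def)

lemma div_split: "q \<ge> (1::nat) \<Longrightarrow> (r + n) div q = r div q + (r mod q + n) div q"
  by (metis (no_types, opaque_lifting) add.assoc add_0 div_add1_eq mod_div_trivial mod_mod_trivial)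

lemma pm_entry:
  assumes q: "q \<ge> 1" and p: "p \<ge> 1" and r: "r < N" and c: "c < N"
  shows "pert_moment q p mu N n m $$ (r,c)
     = sint (mu ((r+n) mod q) ((c+m) mod p)) (\<lambda>x. x^((r+n) div q) * x^((c+m) div p))"
proof -
  define T where "T k l k' l' = sint (mu k' l') (\<lambda>x. (Xfrak q x ^\<^sub>m n) $$ (k, k') *
      (Xmat q N x $$ (r, k) * Xmat p N x $$ (c, l)) * (Xfrak p x ^\<^sub>m m) $$ (l, l'))" for k l k' l'
  have ent: "pert_moment q p mu N n m $$ (r,c) = (\<Sum>k<q. \<Sum>l<p. \<Sum>k'<q. \<Sum>l'<p. T k l k' l')"
    using r c by (simp add: pert_moment_def moment_mat_def mint_def christoffel_def meas_fun_def T_def)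
  define k0 where "k0 = r mod q"
  define l0 where "l0 = c mod p"
  define k1 where "k1 = (k0 + n) mod q"
  define l1 where "l1 = (l0 + m) mod p"
  have k0: "k0 < q" and l0: "l0 < p" and k1: "k1 < q" and l1: "l1 < p"
    using q p by (auto simp: k0_def l0_def k1_def l1_def)
  have XM: "Xmat s N x $$ (t, k) = (if k = t mod s then x ^ (t div s) else 0)" if "t < N" "k < s" for s t k x
    using that by (simp add: Xmat_def)
  have Tz: "T k l k' l' = 0" if "k < q" "l < p" "k' < q" "l' < p"
    "\<not> (k = k0 \<and> l = l0 \<and> k' = k1 \<and> l' = l1)" for k l k' l'
  proof -
    have "(\<lambda>x. (Xfrak q x ^\<^sub>m n) $$ (k, k') *
      (Xmat q N x $$ (r, k) * Xmat p N x $$ (c, l)) * (Xfrak p x ^\<^sub>m m) $$ (l, l')) = (\<lambda>x. 0)"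
      using that xfrak_pow[OF q that(1) that(3)] xfrak_pow[OF p that(2) that(4)] XM[OF r that(1)] XM[OF c that(2)]
      by (auto simp: k0_def l0_def k1_def l1_def)
    then show ?thesis by (simp add: T_def)
  qed
  have "(\<Sum>k<q. \<Sum>l<p. \<Sum>k'<q. \<Sum>l'<p. T k l k' l') = T k0 l0 k1 l1"
  proof -
    have "(\<Sum>k<q. \<Sum>l<p. \<Sum>k'<q. \<Sum>l'<p. T k l k' l') = (\<Sum>l<p. \<Sum>k'<q. \<Sum>l'<p. T k0 l k' l')"
      by (rule sum_single) (use k0 Tz in \<open>auto intro!: sum.neutral\<close>)
    also have "\<dots> = (\<Sum>k'<q. \<Sum>l'<p. T k0 l0 k' l')"
      by (rule sum_single) (use l0 k0 Tz in \<open>auto intro!: sum.neutral\<close>)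
    also have "\<dots> = (\<Sum>l'<p. T k0 l0 k1 l')"
      by (rule sum_single) (use l0 k0 k1 Tz in \<open>auto intro!: sum.neutral\<close>)
    also have "\<dots> = T k0 l0 k1 l1"
      by (rule sum_single) (use l0 k0 k1 l1 Tz in \<open>auto intro!: sum.neutral\<close>)
    finally show ?thesis .
  qed
  also have "T k0 l0 k1 l1 = sint (mu k1 l1) (\<lambda>x. x^((k0 + n) div q) * (x^(r div q) * x^(c div p)) * x^((l0+m) div p))"
    unfolding T_def
    using xfrak_pow[OF q k0 k1] xfrak_pow[OF p l0 l1] XM[OF r k0] XM[OF c l0]
    by (simp add: k0_def l0_def k1_def l1_def)
  also have "\<dots> = sint (mu ((r+n) mod q) ((c+m) mod p)) (\<lambda>x. x^((r+n) div q) * x^((c+m) div p))"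
  proof -
    have "(\<lambda>x::real. x^((k0 + n) div q) * (x^(r div q) * x^(c div p)) * x^((l0+m) div p))
        = (\<lambda>x. x^((r+n) div q) * x^((c+m) div p))"
      using div_split[OF q, of r n] div_split[OF p, of c m]
      by (auto simp: k0_def l0_def power_add algebra_simps)
    moreover have "k1 = (r+n) mod q" "l1 = (c+m) mod p"
      by (simp_all add: k1_def l1_def k0_def l0_def mod_add_left_eq)
    ultimately show ?thesis by simp
  qed
  finally show ?thesis using ent by simp
qed


lemma gb_facts:
  assumes gb: "gauss_borel N M L U"
  shows "L \<in> carrier_mat N N" "U \<in> carrier_mat N N" "minv L \<in> carrier_mat N N"
    "minv U \<in> carrier_mat N N" "M \<in> carrier_mat N N"
    "L * M = minv U" "M * U = minv L"
    "\<And>i j. i < N \<Longrightarrow> j < N \<Longrightarrow> i < j \<Longrightarrow> minv L $$ (i,j) = 0"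
    "\<And>i. i < N \<Longrightarrow> minv L $$ (i,i) = 1"
    "\<And>i. 1 \<le> i \<Longrightarrow> i < N \<Longrightarrow> minv L $$ (i,i-1) = - L $$ (i,i-1)"
    "\<And>i j. i < N \<Longrightarrow> j < N \<Longrightarrow> j < i \<Longrightarrow> minv U $$ (i,j) = 0"
    "\<And>i. i < N \<Longrightarrow> minv U $$ (i,i) * U $$ (i,i) = 1"
    "\<And>i j. i < N \<Longrightarrow> j < N \<Longrightarrow> i < j \<Longrightarrow> L $$ (i,j) = 0"
    "\<And>i. i < N \<Longrightarrow> L $$ (i,i) = 1"
    "\<And>i j. i < N \<Longrightarrow> j < N \<Longrightarrow> j < i \<Longrightarrow> U $$ (i,j) = 0"
proof -
  have Lc: "L \<in> carrier_mat N N" and Uc: "U \<in> carrier_mat N N" and lu: "lower_unitriangular L"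
    and ut: "upper_triangular U" and iu: "invertible_mat U" and Meq: "M = minv L * minv U"
    using gb unfolding gauss_borel_def by auto
  have il: "invertible_mat L" using lut_invertible[OF Lc lu] .
  note mL = minv_prop[OF Lc il] and mU = minv_prop[OF Uc iu]
  have BLc: "minv L \<in> carrier_mat N N" and BUc: "minv U \<in> carrier_mat N N" using mL mU by auto
  show "L \<in> carrier_mat N N" "U \<in> carrier_mat N N" "minv L \<in> carrier_mat N N"
    "minv U \<in> carrier_mat N N" using Lc Uc BLc BUc by auto
  show "M \<in> carrier_mat N N" using Meq BLc BUc by simp
  show "L * M = minv U"
  proof -
    have "L * M = (L * minv L) * minv U" using Meq Lc BLc BUc by (simp add: assoc_mult_mat[of L N N _ N _ N])
    then show ?thesis using mL BUc by simp
  qed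
  show "M * U = minv L"
  proof -
    have "M * U = minv L * (minv U * U)" using Meq Uc BLc BUc by (simp add: assoc_mult_mat[of _ N N _ N U N])
    then show ?thesis using mU BLc by simp
  qed
  have Llow: "\<And>i j. i < N \<Longrightarrow> j < N \<Longrightarrow> i < j \<Longrightarrow> L $$ (i,j) = 0"
    and Ld: "\<And>i. i < N \<Longrightarrow> L $$ (i,i) = 1"
    using lu Lc unfolding lower_unitriangular_def by auto
  show "\<And>i j. i < N \<Longrightarrow> j < N \<Longrightarrow> i < j \<Longrightarrow> L $$ (i,j) = 0"
    "\<And>i. i < N \<Longrightarrow> L $$ (i,i) = 1" using Llow Ld by auto
  show "\<And>i j. i < N \<Longrightarrow> j < N \<Longrightarrow> j < i \<Longrightarrow> U $$ (i,j) = 0"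
    using ut Uc by auto
  note LI = lower_inv[OF Lc BLc conjunct1[OF conjunct2[OF mL]] Llow]
  show "\<And>i j. i < N \<Longrightarrow> j < N \<Longrightarrow> i < j \<Longrightarrow> minv L $$ (i,j) = 0"
    using LI by auto
  show LD: "\<And>i. i < N \<Longrightarrow> minv L $$ (i,i) = 1" using LI Ld by force
  show "\<And>i. 1 \<le> i \<Longrightarrow> i < N \<Longrightarrow> minv L $$ (i,i-1) = - L $$ (i,i-1)"
  proof -
    fix i assume i: "1 \<le> i" "i < N"
    from lower_inv_sub[OF Lc BLc conjunct1[OF conjunct2[OF mL]] Llow i]
    show "minv L $$ (i,i-1) = - L $$ (i,i-1)" using Ld[of i] LD[of "i-1"] i by simp
  qed
  have TT: "transpose_mat U * transpose_mat (minv U) = 1\<^sub>m N"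
    using transpose_mult[OF BUc Uc] mU by simp
  have Ulow: "\<And>i j. i < N \<Longrightarrow> j < N \<Longrightarrow> i < j \<Longrightarrow> transpose_mat U $$ (i,j) = 0"
    using ut Uc by auto
  note UI = lower_inv[OF _ _ TT Ulow, simplified transpose_carrier_mat, OF Uc BUc]
  show "\<And>i j. i < N \<Longrightarrow> j < N \<Longrightarrow> j < i \<Longrightarrow> minv U $$ (i,j) = 0"
  proof -
    fix i j assume "i < N" "j < N" "j < i"
    then show "minv U $$ (i,j) = 0" using UI[of j] Uc BUc by auto
  qed
  show "\<And>i. i < N \<Longrightarrow> minv U $$ (i,i) * U $$ (i,i) = 1"
    using UI Uc BUc by (auto simp: mult.commute)
qed


lemma inv_eq: "(a::real) * b = 1 \<Longrightarrow> a = 1 / b"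
proof -
  assume h: "a * b = 1"
  then have "b \<noteq> 0" by auto
  then show ?thesis using h by (simp add: eq_divide_eq)
qed

lemma claim1:
  assumes g0: "gauss_borel N M0 L0 U0" and g1: "gauss_borel N M1 L1 U1" and n: "1 \<le> n" "n < N"
  shows "(L0 * minv L1) $$ (n,n-1) = L0 $$ (n,n-1) - L1 $$ (n,n-1)"
proof -
  note F0 = gb_facts[OF g0] and F1 = gb_facts[OF g1]
  have "(L0 * minv L1) $$ (n,n-1) = (\<Sum>l<N. L0 $$ (n,l) * minv L1 $$ (l,n-1))"
    using mult_entry[OF F0(1) F1(3)] n by simp
  also have "\<dots> = L0 $$ (n,n) * minv L1 $$ (n,n-1) + L0 $$ (n,n-1) * minv L1 $$ (n-1,n-1)"
  proof (rule sum_two)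
    fix l assume l: "l \<in> {..<N}" "l \<noteq> n" "l \<noteq> n - 1"
    show "L0 $$ (n, l) * minv L1 $$ (l, n-1) = 0"
    proof (cases "l < n")
      case True then show ?thesis using l n F1(8)[of l "n-1"] by auto
    next
      case False then show ?thesis using l n F0(13)[of n l] by auto
    qed
  qed (use n in auto)
  also have "\<dots> = L0 $$ (n,n-1) - L1 $$ (n,n-1)"
    using F0(14)[of n] F1(9)[of "n-1"] F1(10)[of n] n by simp
  finally show ?thesis .
qed

lemma claim2:
  assumes g0: "gauss_borel N M' L' U'" and g1: "gauss_borel N M L U" and n: "n < N"
  shows "(minv U' * U) $$ (n,n) = U $$ (n,n) / U' $$ (n,n)"
proof -
  note F0 = gb_facts[OF g0] and F1 = gb_facts[OF g1]
  have "(minv U' * U) $$ (n,n) = (\<Sum>l<N. minv U' $$ (n,l) * U $$ (l,n))"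
    using mult_entry[OF F0(4) F1(2)] n by simp
  also have "\<dots> = minv U' $$ (n,n) * U $$ (n,n)"
  proof (rule sum_single)
    fix l assume l: "l \<in> {..<N}" "l \<noteq> n"
    show "minv U' $$ (n, l) * U $$ (l, n) = 0"
    proof (cases "l < n")
      case True then show ?thesis using l n F0(11)[of n l] by auto
    next
      case False then show ?thesis using l n F1(15)[of l n] by auto
    qed
  qed (use n in auto)
  also have "\<dots> = U $$ (n,n) / U' $$ (n,n)"
    using inv_eq[OF F0(12)[OF n]] by simp
  finally show ?thesis .
qed

lemma claim4:
  assumes g0: "gauss_borel N M L U" and g1: "gauss_borel N M' L' U'"
    and sh: "\<And>r c. r + 1 < N \<Longrightarrow> c < N \<Longrightarrow> M' $$ (r,c) = M $$ (r+1,c)"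
    and n: "n + 1 < N"
  shows "(minv U' * U) $$ (n,n) = (if n = 0 then 0 else 1) * L' $$ (n,n-1) - L $$ (n+1,n)"
proof -
  note F0 = gb_facts[OF g0] and F1 = gb_facts[OF g1]
  have "minv U' * U = (L' * M') * U" using F1(6) by simp
  also have "\<dots> = L' * (M' * U)" using F1(1) F1(5) F0(2) by (simp add: assoc_mult_mat[of _ N N _ N _ N])
  finally have eq: "minv U' * U = L' * (M' * U)" .
  have MU: "(M' * U) $$ (k,n) = minv L $$ (k+1,n)" if "k + 1 < N" for k
  proof -
    have "(M' * U) $$ (k,n) = (\<Sum>j<N. M' $$ (k,j) * U $$ (j,n))"
      using mult_entry[OF F1(5) F0(2)] that n by simp
    also have "\<dots> = (\<Sum>j<N. M $$ (k+1,j) * U $$ (j,n))"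
      using sh that by (intro sum.cong) auto
    also have "\<dots> = (M * U) $$ (k+1,n)"
      using mult_entry[OF F0(5) F0(2)] that n by simp
    finally show ?thesis using F0(7) by simp
  qed
  have MUc: "M' * U \<in> carrier_mat N N" using F1(5) F0(2) by simp
  have "(minv U' * U) $$ (n,n) = (\<Sum>k<N. L' $$ (n,k) * (M' * U) $$ (k,n))"
    using eq mult_entry[OF F1(1) MUc] n by simp
  also have "\<dots> = (if n = 0 then 0 else 1) * L' $$ (n,n-1) - L $$ (n+1,n)"
  proof (cases "n = 0")
    case True
    have "(\<Sum>k<N. L' $$ (n,k) * (M' * U) $$ (k,n)) = L' $$ (n,n) * (M' * U) $$ (n,n)"
    proof (rule sum_single)
      fix k assume "k \<in> {..<N}" "k \<noteq> n"
      then show "L' $$ (n,k) * (M' * U) $$ (k,n) = 0" using True F1(13)[of n k] n by auto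
    qed (use n in auto)
    then show ?thesis using True MU[of 0] F1(14)[of 0] F0(10)[of 1] n by simp
  next
    case False
    have "(\<Sum>k<N. L' $$ (n,k) * (M' * U) $$ (k,n))
        = L' $$ (n,n-1) * (M' * U) $$ (n-1,n) + L' $$ (n,n) * (M' * U) $$ (n,n)"
    proof (rule sum_two)
      fix k assume k: "k \<in> {..<N}" "k \<noteq> n - 1" "k \<noteq> n"
      show "L' $$ (n,k) * (M' * U) $$ (k,n) = 0"
      proof (cases "k < n")
        case True
        then have "k + 1 < n" using k by auto
        then show ?thesis using MU[of k] F0(8)[of "k+1" n] n by auto
      next
        case False then show ?thesis using k n F1(13)[of n k] by auto
      qed
    qed (use n False in auto)
    then show ?thesis using False MU[of n] MU[of "n-1"] F1(14)[of n] F0(9)[of n] F0(10)[of "n+1"] n by simp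
  qed
  finally show ?thesis .
qed

lemma claim3:
  assumes g0: "gauss_borel N M L U" and g1: "gauss_borel N M' L' U'"
    and sh: "\<And>r c. r < N \<Longrightarrow> c + 1 < N \<Longrightarrow> M' $$ (r,c) = M $$ (r,c+1)"
    and n: "1 \<le> n" "n < N"
  shows "(L * minv L') $$ (n,n-1) = U' $$ (n-1,n-1) / U $$ (n,n)"
proof -
  note F0 = gb_facts[OF g0] and F1 = gb_facts[OF g1]
  have "L * minv L' = L * (M' * U')" using F1(7) by simp
  also have "\<dots> = (L * M') * U'" using F0(1) F1(5) F1(2) by (simp add: assoc_mult_mat[of _ N N _ N _ N])
  finally have eq: "L * minv L' = (L * M') * U'" .
  have LM: "(L * M') $$ (n,k) = minv U $$ (n,k+1)" if "k + 1 < N" for k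
  proof -
    have "(L * M') $$ (n,k) = (\<Sum>j<N. L $$ (n,j) * M' $$ (j,k))"
      using mult_entry[OF F0(1) F1(5)] that n by simp
    also have "\<dots> = (\<Sum>j<N. L $$ (n,j) * M $$ (j,k+1))"
      using sh that by (intro sum.cong) auto
    also have "\<dots> = (L * M) $$ (n,k+1)"
      using mult_entry[OF F0(1) F0(5)] that n by simp
    finally show ?thesis using F0(6) by simp
  qed
  have LMc: "L * M' \<in> carrier_mat N N" using F0(1) F1(5) by simp
  have "(L * minv L') $$ (n,n-1) = (\<Sum>k<N. (L * M') $$ (n,k) * U' $$ (k,n-1))"
    using eq mult_entry[OF LMc F1(2)] n by simp
  also have "\<dots> = (L * M') $$ (n,n-1) * U' $$ (n-1,n-1)"
  proof (rule sum_single)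
    fix k assume k: "k \<in> {..<N}" "k \<noteq> n - 1"
    show "(L * M') $$ (n,k) * U' $$ (k,n-1) = 0"
    proof (cases "k < n - 1")
      case True
      then show ?thesis using LM[of k] F0(11)[of n "k+1"] n by auto
    next
      case False then show ?thesis using k n F1(15)[of k "n-1"] by auto
    qed
  qed (use n in auto)
  also have "\<dots> = U' $$ (n-1,n-1) / U $$ (n,n)"
    using LM[of "n-1"] n inv_eq[OF F0(12)[of n]] by simp
  finally show ?thesis .
qed

theorem mainTheorem3:
  fixes p q N :: nat
    and mu :: "nat \<Rightarrow> nat \<Rightarrow> rmeas"
    and LL UU :: "nat \<Rightarrow> nat \<Rightarrow> real mat"
  assumes "p \<ge> 1" and "q \<ge> 1" and "N \<ge> 1"
    and "\<forall>i<q. \<forall>j<p. finite_moments_meas (mu i j)"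
    and "gauss_borel N (pert_moment q p mu N 0 0) (LL 0 0) (UU 0 0)"
    and "\<forall>b\<in>{1..q}. gauss_borel N (pert_moment q p mu N b 0) (LL b 0) (UU b 0)"
    and "\<forall>a\<in>{1..p}. gauss_borel N (pert_moment q p mu N 0 a) (LL 0 a) (UU 0 a)"
    and "a \<in> {1..p}" and "b \<in> {1..q}"
  shows
    "(\<forall>n\<in>{1..N-1}. (LL 0 (a-1) * minv (LL 0 a)) $$ (n, n-1)
        = LL 0 (a-1) $$ (n, n-1) - LL 0 a $$ (n, n-1))
   \<and> (\<forall>n\<in>{..<N}. (minv (UU b 0) * UU (b-1) 0) $$ (n, n)
        = UU (b-1) 0 $$ (n, n) / UU b 0 $$ (n, n))
   \<and> (\<forall>n\<in>{1..N-1}. (LL 0 (a-1) * minv (LL 0 a)) $$ (n, n-1)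
        = UU 0 a $$ (n-1, n-1) / UU 0 (a-1) $$ (n, n))
   \<and> (\<forall>n\<in>{..<N-1}. (minv (UU b 0) * UU (b-1) 0) $$ (n, n)
        = (if n = 0 then 0 else 1) * LL b 0 $$ (n, n-1) - LL (b-1) 0 $$ (n+1, n))"
proof -
  have q: "q \<ge> 1" and p: "p \<ge> 1" using assms by auto
  have a: "1 \<le> a" "a \<le> p" and b: "1 \<le> b" "b \<le> q" using assms by auto
  have gB: "gauss_borel N (pert_moment q p mu N b 0) (LL b 0) (UU b 0)" using assms by auto
  have gB1: "gauss_borel N (pert_moment q p mu N (b-1) 0) (LL (b-1) 0) (UU (b-1) 0)"
  proof (cases "b = 1")
    case True then show ?thesis using assms(5) by simp
  next
    case False then have "b - 1 \<in> {1..q}" using b by auto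
    then show ?thesis using assms(6) by blast
  qed
  have gA: "gauss_borel N (pert_moment q p mu N 0 a) (LL 0 a) (UU 0 a)" using assms by auto
  have gA1: "gauss_borel N (pert_moment q p mu N 0 (a-1)) (LL 0 (a-1)) (UU 0 (a-1))"
  proof (cases "a = 1")
    case True then show ?thesis using assms(5) by simp
  next
    case False then have "a - 1 \<in> {1..p}" using a by auto
    then show ?thesis using assms(7) by blast
  qed
  have shB: "pert_moment q p mu N b 0 $$ (r,c) = pert_moment q p mu N (b-1) 0 $$ (r+1,c)"
    if "r + 1 < N" "c < N" for r c
    using pm_entry[OF q p, of r N c mu b 0] pm_entry[OF q p, of "r+1" N c mu "b-1" 0] that b by simp
  have shA: "pert_moment q p mu N 0 a $$ (r,c) = pert_moment q p mu N 0 (a-1) $$ (r,c+1)"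
    if "r < N" "c + 1 < N" for r c
    using pm_entry[OF q p, of r N c mu 0 a] pm_entry[OF q p, of r N "c+1" mu 0 "a-1"] that a by simp
  show ?thesis
  proof (intro conjI ballI)
    fix n assume "n \<in> {1..N-1}"
    then show "(LL 0 (a-1) * minv (LL 0 a)) $$ (n, n-1) = LL 0 (a-1) $$ (n, n-1) - LL 0 a $$ (n, n-1)"
      using claim1[OF gA1 gA] assms(3) by auto
  next
    fix n assume "n \<in> {..<N}"
    then show "(minv (UU b 0) * UU (b-1) 0) $$ (n, n) = UU (b-1) 0 $$ (n, n) / UU b 0 $$ (n, n)"
      using claim2[OF gB gB1] by auto
  next
    fix n assume "n \<in> {1..N-1}"
    then show "(LL 0 (a-1) * minv (LL 0 a)) $$ (n, n-1) = UU 0 a $$ (n-1, n-1) / UU 0 (a-1) $$ (n, n)"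
      using claim3[OF gA1 gA shA] assms(3) by auto
  next
    fix n assume "n \<in> {..<N-1}"
    then show "(minv (UU b 0) * UU (b-1) 0) $$ (n, n)
        = (if n = 0 then 0 else 1) * LL b 0 $$ (n, n-1) - LL (b-1) 0 $$ (n+1, n)"
      using claim4[OF gB1 gB shB] by auto
  qed
qed

end
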